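(* Let $(\Omega,\mathcal A)$ be a measurable space and let $f$ be a random holomorphic function on the polydisc $\mathbb D^n=\{z\in\mathbb C^n:|z_j|<1,\ j=1,\dots,n\}$. Then $f$ is the sum of a random power series: there are measurable functions $a_\alpha:\Omega\to\mathbb C$, $\alpha\in(\mathbb N\cup\{0\})^n$, such that $f(\omega,z)=\sum_\alpha a_\alpha(\omega)z^\alpha$ for all $\omega\in\Omega$ and $z\in\mathbb D^n$.
   Context: A random holomorphic function on an open set $U\subset\mathbb C^n$ is a function $f:\Omega\times U\to\mathbb C$ such that $f(\omega,\cdot)$ is holomorphic for each $\omega\in\Omega$ and $f(\cdot,z)$ is measurable for each $z\in U$. A random power series is an expression $\sum_\alpha a_\alpha(\omega)z^\alpha$ with each coefficient $a_\alpha$ measurable. *)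

theory Defs
  imports "HOL-Analysis.Analysis"
begin

definition holomorphic_n_on :: "(complex^'n \<Rightarrow> complex) \<Rightarrow> (complex^'n) set \<Rightarrow> bool" where
  "holomorphic_n_on g U \<longleftrightarrow>
     (\<forall>z\<in>U. \<exists>L. (g has_derivative L) (at z) \<and> (\<forall>c v. L (c *s v) = c * L v))"

definition polydisc :: "(complex^'n) set" where
  "polydisc = {z. \<forall>j. norm (z $ j) < 1}"

definition random_holomorphic ::
    "'w measure \<Rightarrow> (complex^'n) set \<Rightarrow> ('w \<Rightarrow> complex^'n \<Rightarrow> complex) \<Rightarrow> bool" where
  "random_holomorphic M U f \<longleftrightarrow>
     (\<forall>\<omega>\<in>space M. holomorphic_n_on (f \<omega>) U) \<and>
     (\<forall>z\<in>U. (\<lambda>\<omega>. f \<omega> z) \<in> borel_measurable M)"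

definition monomial_n :: "complex^'n \<Rightarrow> nat^'n \<Rightarrow> complex" where
  "monomial_n z \<alpha> = (\<Prod>j\<in>UNIV. (z $ j) ^ (\<alpha> $ j))"

end

theory Submission
  imports Defs "HOL-Complex_Analysis.Complex_Analysis"
begin

definition upd :: "'a^'n \<Rightarrow> 'n \<Rightarrow> 'a \<Rightarrow> 'a^'n" where
  "upd z i w = (\<chi> j. if j = i then w else z $ j)"

lemma upd_nth[simp]: "upd z i w $ j = (if j = i then w else z $ j)"
  by (simp add: upd_def)
lemma upd_upd_same[simp]: "upd (upd z i v) i w = upd z i w"
  by (simp add: vec_eq_iff)
lemma upd_comm: "i \<noteq> j \<Longrightarrow> upd (upd z i v) j w = upd (upd z j w) i v"
  by (simp add: vec_eq_iff)
lemma upd_self[simp]: "upd z i (z$i) = z"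
  by (simp add: vec_eq_iff)

lemma continuous_on_upd[continuous_intros]:
  "continuous_on S (\<lambda>w. upd z i w)"
  unfolding upd_def
proof (rule continuous_on_vec_lambda)
  fix j show "continuous_on S (\<lambda>x. if j = i then x else z $ j)"
    by (cases "j = i") (simp_all add: continuous_on_id)
qed

definition pd :: "real \<Rightarrow> (complex^'n) set" where "pd r = {z. \<forall>j. norm (z$j) < r}"
definition cpd :: "real \<Rightarrow> (complex^'n) set" where "cpd r = {z. \<forall>j. norm (z$j) \<le> r}"

lemma polydisc_pd: "polydisc = pd 1" by (simp add: polydisc_def pd_def)

lemma open_pd: "open (pd r :: (complex^'n) set)"
proof -
  have "pd r = (\<Inter>j. {z::complex^'n. norm (z$j) < r})" by (auto simp: pd_def)
  moreover have "open {z::complex^'n. norm (z$j) < r}" for j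
    by (intro open_Collect_less continuous_intros)
  then have "open (\<Inter>j. {z::complex^'n. norm (z$j) < r})"
    by (intro open_INT) auto
  ultimately show ?thesis by (simp only:)
qed

lemma compact_cpd: "compact (cpd r :: (complex^'n) set)"
proof -
  have "cpd r = (\<Inter>j. {z::complex^'n. norm (z$j) \<le> r})" by (auto simp: cpd_def)
  moreover have "closed {z::complex^'n. norm (z$j) \<le> r}" for j
    by (intro closed_Collect_le continuous_intros)
  then have "closed (\<Inter>j. {z::complex^'n. norm (z$j) \<le> r})"
    by (intro closed_INT) auto
  ultimately have cl: "closed (cpd r :: (complex^'n) set)" by (simp only:)
  have "norm z \<le> real CARD('n) * r" if "z \<in> cpd r" for z :: "complex^'n"
  proof -
    have "norm z \<le> (\<Sum>j\<in>UNIV. norm (z$j))"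
      unfolding norm_vec_def by (rule L2_set_le_sum) auto
    also have "\<dots> \<le> (\<Sum>j\<in>(UNIV::'n set). r)"
      using that unfolding cpd_def by (intro sum_mono) blast
    finally show ?thesis by simp
  qed
  then have "bounded (cpd r :: (complex^'n) set)" unfolding bounded_iff by blast
  with cl show ?thesis by (simp add: compact_eq_bounded_closed)
qed

lemma cpd_sub_pd: "r < s \<Longrightarrow> cpd r \<subseteq> pd s"
  unfolding cpd_def pd_def using le_less_trans by blast
lemma pd_sub_cpd: "pd r \<subseteq> cpd r"
  unfolding cpd_def pd_def using less_imp_le by blast

lemma pd_radius:
  assumes "z \<in> pd 1"
  obtains r where "0 < r" "r < 1" "z \<in> pd r"
proof -
  define m where "m = Max (range (\<lambda>j. norm (z$j)))"
  have fin: "finite (range (\<lambda>j. norm (z$j)))" by simp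
  have le: "norm (z$j) \<le> m" for j unfolding m_def by (rule Max_ge[OF fin]) auto
  have "m \<in> range (\<lambda>j. norm (z$j))" unfolding m_def by (rule Max_in[OF fin]) auto
  then obtain j0 where "m = norm (z$j0)" by auto
  then have "m < 1" "0 \<le> m" using assms by (auto simp: pd_def)
  have mm: "m < (m+1)/2" using \<open>m<1\<close> by simp
  have *: "norm (z$j) < (m+1)/2" for j using le[of j] mm by (rule le_less_trans)
  show ?thesis
  proof (rule that)
    show "0 < (m+1)/2" using \<open>0\<le>m\<close> by simp
    show "(m+1)/2 < 1" using \<open>m<1\<close> by simp
    show "z \<in> pd ((m+1)/2)" using * by (simp add: pd_def)
  qed
qed

lemma upd_in_pd: "z \<in> pd r \<Longrightarrow> norm w < r \<Longrightarrow> upd z i w \<in> pd r"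
  unfolding pd_def by simp
lemma upd_in_cpd: "z \<in> cpd r \<Longrightarrow> norm w \<le> r \<Longrightarrow> upd z i w \<in> cpd r"
  unfolding cpd_def by simp

lemma cpd_sub_pd1: "r < 1 \<Longrightarrow> cpd r \<subseteq> pd 1"
  by (erule cpd_sub_pd)

lemma t1: "upd z i w = (upd z i 0 + w *s upd 0 i (1::complex))"
proof -
  have "upd z i w $ j = (upd z i 0 + w *s upd 0 i (1::complex)) $ j" for j
    by (cases "j = i") simp_all
  then show ?thesis by (simp add: vec_eq_iff)
qed
lemma t2: "linear (\<lambda>w::complex. w *s upd 0 i (1::complex))"
  proof (rule linearI)
    fix b1 b2 :: complex show "(b1 + b2) *s upd 0 i 1 = b1 *s upd 0 i 1 + b2 *s upd 0 i (1::complex)"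
      by (simp add: vec_eq_iff distrib_right)
  next
    fix r :: real and b :: complex show "(r *\<^sub>R b) *s upd 0 i 1 = r *\<^sub>R (b *s upd 0 i (1::complex))"
      unfolding vec_eq_iff by (simp add: vector_scaleR_component)
  qed
lemma upd_deriv:
  "((\<lambda>w. upd z i w) has_derivative (\<lambda>w. w *s upd 0 i (1::complex))) (at w0)"
proof -
  obtain c where c: "\<And>w. upd z i w = c + w *s upd 0 i (1::complex)"
    using t1 by blast
  have bl: "bounded_linear (\<lambda>w::complex. w *s upd 0 i (1::complex))"
    using t2 by (simp only: linear_conv_bounded_linear)
  have "((\<lambda>w. c + w *s upd 0 i (1::complex)) has_derivative (\<lambda>w. 0 + w *s upd 0 i (1::complex))) (at w0)"
    by (intro has_derivative_add has_derivative_const bounded_linear.has_derivative[OF bl has_derivative_ident])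
  then show ?thesis by (simp add: c)
qed

definition SH :: "(complex^'n \<Rightarrow> complex) \<Rightarrow> bool" where
  "SH h \<longleftrightarrow> continuous_on (pd 1) h \<and> (\<forall>z\<in>pd 1. \<forall>i. (\<lambda>w. h (upd z i w)) holomorphic_on ball 0 1)"

lemma SH_from_hol:
  fixes g :: "complex^'n \<Rightarrow> complex"
  assumes "holomorphic_n_on g polydisc"
  shows "SH g"
proof -
  have P: "\<exists>L. (g has_derivative L) (at z) \<and> (\<forall>c v. L (c *s v) = c * L v)" if "z \<in> pd 1" for z
  proof -
    from assms have "\<forall>z\<in>pd 1. \<exists>L. (g has_derivative L) (at z) \<and> (\<forall>c v. L (c *s v) = c * L v)"
      by (simp add: holomorphic_n_on_def polydisc_pd)
    then show ?thesis using that by (rule bspec)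
  qed
  have "continuous_on (pd 1) g"
  proof (rule continuous_at_imp_continuous_on, rule ballI)
    fix z :: "complex^'n" assume "z \<in> pd 1"
    then obtain L where "(g has_derivative L) (at z)" using P by blast
    then show "isCont g z" by (rule has_derivative_continuous)
  qed
  moreover have "(\<lambda>w. g (upd z i w)) holomorphic_on ball 0 1" if z: "z \<in> pd 1" for z i
  proof -
    have "(\<lambda>w. g (upd z i w)) field_differentiable at w0" if w0: "w0 \<in> ball 0 1" for w0
    proof -
      have u: "upd z i w0 \<in> pd 1" using z w0 by (intro upd_in_pd) auto
      obtain L where L: "(g has_derivative L) (at (upd z i w0))" and lin: "\<forall>c v. L (c *s v) = c * L v"
        using P[OF u] by blast
      have "((\<lambda>w. g (upd z i w)) has_derivative (\<lambda>w. L (w *s upd 0 i 1))) (at w0)"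
        using has_derivative_compose[OF upd_deriv L] by (simp add: o_def)
      also have "(\<lambda>w. L (w *s upd 0 i 1)) = (\<lambda>w. L (upd 0 i 1) * w)"
        using lin by (simp add: mult.commute)
      finally show ?thesis unfolding field_differentiable_def has_field_derivative_def by blast
    qed
    then show ?thesis by (simp add: holomorphic_on_open field_differentiable_def[symmetric] open_ball)
  qed
  ultimately show ?thesis unfolding SH_def by blast
qed

definition coef :: "'n \<Rightarrow> nat \<Rightarrow> (complex^'n \<Rightarrow> complex) \<Rightarrow> complex^'n \<Rightarrow> complex" where
  "coef i k h z = (deriv ^^ k) (\<lambda>w. h (upd z i w)) 0 / fact k"

lemma coef_upd_same[simp]: "coef i k h (upd z i v) = coef i k h z"
  by (simp add: coef_def)

lemma coef_upd_other:
  assumes "i \<noteq> j" "\<And>x v. h (upd x j v) = h x"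
  shows "coef i k h (upd z j v) = coef i k h z"
proof -
  have "(\<lambda>w. h (upd (upd z j v) i w)) = (\<lambda>w. h (upd z i w))"
    using assms by (simp add: upd_comm)
  then show ?thesis by (simp add: coef_def)
qed

lemma SH_slice_hol: "SH h \<Longrightarrow> z \<in> pd 1 \<Longrightarrow> (\<lambda>w. h (upd z i w)) holomorphic_on ball 0 1"
  by (simp add: SH_def)

lemma coef_sums:
  assumes "SH h" "z \<in> pd 1" "norm t < 1"
  shows "(\<lambda>m. coef i m h z * t^m) sums h (upd z i t)"
  using holomorphic_power_series[OF SH_slice_hol[OF assms(1,2)], of t] assms(3)
  by (simp add: coef_def)

lemma coef_bound:
  assumes "SH h" "z \<in> pd 1" "0 < \<rho>" "\<rho> < 1"
    and B: "\<And>w. norm w = \<rho> \<Longrightarrow> norm (h (upd z i w)) \<le> B"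
  shows "norm (coef i k h z) \<le> B / \<rho>^k"
proof -
  have hol: "(\<lambda>w. h (upd z i w)) holomorphic_on ball 0 1" by (rule SH_slice_hol[OF assms(1,2)])
  have sub: "cball 0 \<rho> \<subseteq> ball (0::complex) 1" using assms(4) by auto
  have "norm ((deriv ^^ k) (\<lambda>w. h (upd z i w)) 0) \<le> fact k * B / \<rho>^k"
  proof (rule Cauchy_inequality)
    show "(\<lambda>w. h (upd z i w)) holomorphic_on ball 0 \<rho>"
      using hol by (rule holomorphic_on_subset) (use sub in auto)
    show "continuous_on (cball 0 \<rho>) (\<lambda>w. h (upd z i w))"
      using holomorphic_on_imp_continuous_on[OF hol] sub by (rule continuous_on_subset)
  qed (use assms B in auto)
  then have "norm ((deriv ^^ k) (\<lambda>w. h (upd z i w)) 0) / fact k \<le> (fact k * B / \<rho>^k) / fact k"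
    by (rule divide_right_mono) simp
  moreover have "(fact k * B / \<rho>^k) / fact k = B / \<rho>^k" by simp
  moreover have "norm (coef i k h z) = norm ((deriv ^^ k) (\<lambda>w. h (upd z i w)) 0) / fact k"
    unfolding coef_def by (simp only: norm_divide norm_fact)
  ultimately show ?thesis by linarith
qed

lemma continuous_on_upd2:
  fixes S :: "(complex^'n) set"
  shows "continuous_on S (\<lambda>z. upd z i (t::complex))"
  unfolding upd_def
proof (rule continuous_on_vec_lambda)
  fix j show "continuous_on S (\<lambda>z. if j = i then t else z $ j)"
  proof (cases "j = i")
    case True then show ?thesis by (simp add: continuous_on_const)
  next
    case False
    have "continuous_on S (\<lambda>z::complex^'n. z $ j)"
      by (rule linear_continuous_on[OF bounded_linear_vec_nth])
    then show ?thesis using False by simp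
  qed
qed

lemma coef_remainder:
  assumes "SH h" "z \<in> pd 1" "0 < \<rho>" "\<rho> < 1"
    and B: "\<And>w. norm w = \<rho> \<Longrightarrow> norm (h (upd z i w)) \<le> B"
    and t: "norm t \<le> \<rho>/2"
  shows "norm (h (upd z i t) - (\<Sum>m<Suc k. coef i m h z * t^m)) \<le> 2 * B * (norm t / \<rho>)^Suc k"
proof -
  define f where "f = (\<lambda>m. coef i m h z * t^m)"
  have "norm t < 1" using t assms(4) by linarith
  then have s: "f sums h (upd z i t)" unfolding f_def by (rule coef_sums[OF assms(1,2)])
  have s2: "(\<lambda>m. f (m + Suc k)) sums (h (upd z i t) - (\<Sum>m<Suc k. f m))"
    by (rule sums_iff_shift[THEN iffD2]) (use s in simp)
  define q where "q = norm t / \<rho>"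
  have q0: "0 \<le> q" unfolding q_def using assms(3) by simp
  have q1: "q \<le> 1/2" unfolding q_def using t assms(3) by (simp add: divide_le_eq)
  have "norm (h (upd z i (of_real \<rho>))) \<le> B" using B[of "of_real \<rho>"] assms(3) by simp
  then have B0: "0 \<le> B" using norm_ge_zero order_trans by blast
  have bnd: "norm (f n) \<le> B * q^n" for n
  proof -
    have "norm (f n) = norm (coef i n h z) * norm t ^ n" unfolding f_def by (simp add: norm_mult norm_power)
    also have "\<dots> \<le> (B / \<rho>^n) * norm t ^ n"
      by (rule mult_right_mono[OF coef_bound[OF assms(1-4) B]]) simp_all
    also have "\<dots> = B * q^n" unfolding q_def by (simp add: power_divide)
    finally show ?thesis .
  qed
  have qlt: "norm q < 1" using q0 q1 by simp
  have g: "(\<lambda>m. (B * q^Suc k) * q^m) sums ((B * q^Suc k) * (1 / (1 - q)))"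
    by (rule sums_mult[OF geometric_sums[OF qlt]])
  have geq: "(\<lambda>m. (B * q^Suc k) * q^m) = (\<lambda>m. B * q^(m + Suc k))"
    by (rule ext) (simp add: power_add mult_ac)
  have gs: "summable (\<lambda>m. B * q^(m + Suc k))"
    using sums_summable[OF g] unfolding geq .
  have "norm (h (upd z i t) - (\<Sum>m<Suc k. f m)) = norm (\<Sum>m. f (m + Suc k))"
    using s2 by (simp add: sums_iff)
  also have "\<dots> \<le> (\<Sum>m. B * q^(m + Suc k))"
    by (rule norm_suminf_le) (rule bnd, rule gs)
  also have "\<dots> = (B * q^Suc k) * (1 / (1 - q))"
    using g geq by (simp add: sums_iff)
  also have "\<dots> \<le> (B * q^Suc k) * 2"
  proof (rule mult_left_mono)
    show "1 / (1 - q) \<le> 2" using q1 by (simp add: divide_le_eq)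
    show "0 \<le> B * q^Suc k" using B0 q0 by simp
  qed
  also have "\<dots> = 2 * B * (norm t / \<rho>)^Suc k" unfolding q_def by simp
  finally show ?thesis unfolding f_def .
qed

definition tseq :: "real \<Rightarrow> nat \<Rightarrow> complex" where
  "tseq r n = complex_of_real (r / (2 * (real n + 1)))"

definition Qf :: "'n \<Rightarrow> nat \<Rightarrow> (complex^'n \<Rightarrow> complex) \<Rightarrow> real \<Rightarrow> nat \<Rightarrow> complex^'n \<Rightarrow> complex" where
  "Qf i k h r n z = (h (upd z i (tseq r n)) - (\<Sum>m<k. coef i m h z * tseq r n ^ m)) / tseq r n ^ k"

lemma norm_tseq: "0 < r \<Longrightarrow> norm (tseq r n) = r / (2 * (real n + 1))"
  unfolding tseq_def norm_of_real by simp

lemma tseq_nz: "0 < r \<Longrightarrow> tseq r n \<noteq> 0"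
proof -
  assume r: "0 < r"
  have "0 < r / (2 * (real n + 1))" using r by simp
  then have "norm (tseq r n) \<noteq> 0" using norm_tseq[OF r, of n] by linarith
  then show ?thesis by simp
qed

lemma tseq_le: "0 < r \<Longrightarrow> norm (tseq r n) \<le> r/2"
proof -
  assume r: "0 < r"
  have "r / (2 * (real n + 1)) \<le> r / 2" by (rule divide_left_mono) (use r in auto)
  then show ?thesis using norm_tseq[OF r] by simp
qed

lemma Q_bound:
  fixes h :: "complex^'n \<Rightarrow> complex"
  assumes "SH h" "0 < r" "r < 1" "z \<in> cpd r" and B: "\<forall>x\<in>cpd r. norm (h x) \<le> B"
  shows "norm (Qf i k h r n z - coef i k h z) \<le> (B / r^k) / (real n + 1)"
proof -
  define t where "t = tseq r n"
  define nt where "nt = r / (2 * (real n + 1))"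
  have nt: "norm t = nt" unfolding t_def nt_def by (rule norm_tseq[OF assms(2)])
  have nt0: "0 < nt" unfolding nt_def using assms(2) by simp
  have ntle: "nt \<le> r/2" unfolding nt_def using assms(2) by (simp add: field_simps)
  have tne: "t \<noteq> 0" using nt nt0 by auto
  have zp: "z \<in> pd 1" using assms(3,4) cpd_sub_pd1 by blast
  have Bw: "norm (h (upd z i w)) \<le> B" if "norm w = r" for w
    using B upd_in_cpd[OF assms(4)] that by simp
  have R: "norm (h (upd z i t) - (\<Sum>m<Suc k. coef i m h z * t^m)) \<le> 2 * B * (nt / r)^Suc k"
    using coef_remainder[OF assms(1) zp assms(2,3) Bw, of t k] nt ntle by simp
  have eq: "Qf i k h r n z - coef i k h z = (h (upd z i t) - (\<Sum>m<Suc k. coef i m h z * t^m)) / t^k"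
    unfolding Qf_def t_def[symmetric] using tne by (simp add: field_simps)
  have "norm (Qf i k h r n z - coef i k h z) = norm (h (upd z i t) - (\<Sum>m<Suc k. coef i m h z * t^m)) / nt^k"
    unfolding eq by (simp add: norm_divide norm_power nt)
  also have "\<dots> \<le> (2 * B * (nt / r)^Suc k) / nt^k"
    by (rule divide_right_mono[OF R]) (use nt0 in simp)
  also have "\<dots> = 2 * B * nt / r^Suc k"
    using nt0 by (simp add: power_divide field_simps)
  also have "\<dots> = B * (2 * nt / r) / r^k"
    using assms(2) by (simp add: field_simps)
  also have "2 * nt / r = 1 / (real n + 1)"
  proof -
    have n1: "real n + 1 \<noteq> 0" by (simp add: add_nonneg_eq_0_iff)
    have n2: "2 * real n + 2 \<noteq> 0" by (simp add: add_nonneg_eq_0_iff)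
    have "2 * nt = r / (real n + 1)" unfolding nt_def using n1 n2 by (simp add: field_simps)
    then show ?thesis using assms(2) n1 by (simp add: field_simps)
  qed
  also have "B * (1 / (real n + 1)) / r^k = (B / r^k) / (real n + 1)"
    by simp
  finally show ?thesis .
qed

lemma unif_bound:
  assumes "\<And>n x. x \<in> S \<Longrightarrow> dist (F n x) (G x) \<le> C / (real n + 1)"
  shows "uniform_limit S F G sequentially"
proof (rule uniform_limitI)
  fix e :: real assume e: "e > 0"
  obtain N :: nat where N: "C / e < real N" using reals_Archimedean2 by blast
  show "\<forall>\<^sub>F n in sequentially. \<forall>x\<in>S. dist (F n x) (G x) < e"
    unfolding eventually_sequentially
  proof (intro exI allI impI ballI)
    fix n x assume n: "N \<le> n" and x: "x \<in> S"
    have "C / e < real n + 1" using N n by linarith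
    then have "C < e * (real n + 1)" using e by (simp add: divide_less_eq mult.commute)
    then have "C / (real n + 1) < e" by (simp add: divide_less_eq mult.commute)
    with assms[OF x, of n] show "dist (F n x) (G x) < e" by linarith
  qed
qed

lemma SH_bound:
  fixes h :: "complex^'n \<Rightarrow> complex"
  assumes "SH h" "r < 1"
  obtains B where "\<forall>x\<in>cpd r. norm (h x) \<le> B"
proof -
  have "continuous_on (cpd r) h"
    using assms unfolding SH_def by (meson continuous_on_subset cpd_sub_pd1)
  then obtain B where "\<And>x. x \<in> cpd r \<Longrightarrow> norm (h x) \<le> B"
    using continuous_on_compact_bound[OF compact_cpd] by blast
  then show ?thesis using that by blast
qed

lemma Q_unif:
  fixes h :: "complex^'n \<Rightarrow> complex"
  assumes "SH h" "0 < r" "r < 1"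
  shows "uniform_limit (cpd r) (Qf i k h r) (coef i k h) sequentially"
proof -
  obtain B where B: "\<forall>x\<in>cpd r. norm (h x) \<le> B" using SH_bound[OF assms(1,3)] by blast
  show ?thesis
    by (rule unif_bound[where C="B / r^k"]) (use Q_bound[OF assms _ B] in \<open>simp add: dist_norm\<close>)
qed

lemma uniform_limit_compose_map:
  assumes "uniform_limit T F G fil" "\<And>x. x \<in> S \<Longrightarrow> g x \<in> T"
  shows "uniform_limit S (\<lambda>n x. F n (g x)) (\<lambda>x. G (g x)) fil"
proof (rule uniform_limitI)
  fix e :: real assume "e > 0"
  then have "\<forall>\<^sub>F n in fil. \<forall>x\<in>T. dist (F n x) (G x) < e"
    using assms(1) by (simp add: uniform_limit_iff)
  then show "\<forall>\<^sub>F n in fil. \<forall>x\<in>S. dist (F n (g x)) (G (g x)) < e"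
    by (rule eventually_mono) (use assms(2) in blast)
qed

lemma SH_cont: "SH h \<Longrightarrow> continuous_on (pd 1) h"
  by (simp add: SH_def)

lemma SH_coef:
  fixes h :: "complex^'n \<Rightarrow> complex"
  assumes SHh: "SH h"
  shows "SH (coef i k h)"
proof (induction k rule: less_induct)
  case (less k)
  have IH: "SH (coef i m h)" if "m < k" for m using less.IH that .
  have cont_cpd: "continuous_on (cpd r) (coef i k h)" if r: "0 < r" "r < 1" for r
  proof (rule uniform_limit_theorem[OF _ Q_unif[OF SHh r]])
    show "\<forall>\<^sub>F n in sequentially. continuous_on (cpd r) (Qf i k h r n)"
    proof (intro always_eventually allI)
      fix n
      have tn: "norm (tseq r n) \<le> r" using tseq_le[OF r(1), of n] r(1) by linarith
      have cu: "continuous_on (cpd r) (\<lambda>z. h (upd z i (tseq r n)))"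
      proof (rule continuous_on_compose2[OF SH_cont[OF SHh] continuous_on_upd2])
        show "(\<lambda>z. upd z i (tseq r n)) ` cpd r \<subseteq> pd 1"
          using upd_in_cpd[OF _ tn] cpd_sub_pd1[OF r(2)] by blast
      qed
      have cc: "continuous_on (cpd r) (coef i m h)" if "m < k" for m
        using SH_cont[OF IH[OF that]] cpd_sub_pd1[OF r(2)] by (rule continuous_on_subset)
      show "continuous_on (cpd r) (Qf i k h r n)"
        unfolding Qf_def by (intro continuous_intros cu cc) (use tseq_nz[OF r(1)] in auto)
    qed
  qed simp
  have cont: "continuous_on (pd 1) (coef i k h)"
  proof (rule continuous_at_imp_continuous_on, rule ballI)
    fix z :: "complex^'n" assume "z \<in> pd 1"
    then obtain r where r: "0 < r" "r < 1" "z \<in> pd r" by (rule pd_radius)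
    have "z \<in> interior (cpd r)" using interior_maximal[OF pd_sub_cpd open_pd] r(3) by blast
    then show "isCont (coef i k h) z" by (rule continuous_on_interior[OF cont_cpd[OF r(1,2)]])
  qed
  have hol: "(\<lambda>v. coef i k h (upd z j v)) holomorphic_on ball 0 1" if z: "z \<in> pd 1" for z j
  proof (cases "j = i")
    case True then show ?thesis by (simp add: holomorphic_on_const)
  next
    case False
    have "(\<lambda>v. coef i k h (upd z j v)) field_differentiable at v0" if v0: "v0 \<in> ball 0 1" for v0
    proof -
      have "upd z j v0 \<in> pd 1" using z v0 by (intro upd_in_pd) auto
      then obtain r where r: "0 < r" "r < 1" "upd z j v0 \<in> pd r" by (rule pd_radius)
      have "norm (upd z j v0 $ j) < r" using r(3) unfolding pd_def by blast
      then have v0r: "norm v0 < r" by simp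
      have map: "upd z j v \<in> cpd r" if "v \<in> cball 0 r" for v
        unfolding cpd_def mem_Collect_eq
      proof (intro allI)
        fix l show "norm (upd z j v $ l) \<le> r"
        proof (cases "l = j")
          case True then show ?thesis using that by simp
        next
          case False
          have "norm (upd z j v0 $ l) < r" using r(3) unfolding pd_def by blast
          then show ?thesis using False by simp
        qed
      qed
      have ul: "uniform_limit (cball 0 r) (\<lambda>n v. Qf i k h r n (upd z j v)) (\<lambda>v. coef i k h (upd z j v)) sequentially"
        by (rule uniform_limit_compose_map[OF Q_unif[OF SHh r(1,2)]]) (rule map)
      have holn: "(\<lambda>v. Qf i k h r n (upd z j v)) holomorphic_on ball 0 1" for n
      proof -
        define t where "t = tseq r n"
        have tn: "norm t < 1" unfolding t_def using tseq_le[OF r(1), of n] r(2) by linarith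
        have tne: "t \<noteq> 0" unfolding t_def by (rule tseq_nz[OF r(1)])
        have zt: "upd z i t \<in> pd 1" using upd_in_pd[OF z tn] .
        have h1: "(\<lambda>v. h (upd (upd z j v) i t)) holomorphic_on ball 0 1"
          using SH_slice_hol[OF SHh zt, of j] by (simp only: upd_comm[OF False])
        have h2: "(\<lambda>v. coef i m h (upd z j v)) holomorphic_on ball 0 1" if "m < k" for m
          using SH_slice_hol[OF IH[OF that] z] .
        show ?thesis
          unfolding Qf_def t_def[symmetric]
          by (intro holomorphic_intros h1 h2) (use tne in auto)
      qed
      have "continuous_on (cball 0 r) (\<lambda>v. coef i k h (upd z j v)) \<and> (\<lambda>v. coef i k h (upd z j v)) holomorphic_on ball 0 r"
      proof (rule holomorphic_uniform_limit[OF _ ul])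
        show "\<forall>\<^sub>F n in sequentially. continuous_on (cball 0 r) (\<lambda>v. Qf i k h r n (upd z j v)) \<and>
                (\<lambda>v. Qf i k h r n (upd z j v)) holomorphic_on ball 0 r"
        proof (intro always_eventually allI conjI)
          fix n
          have sub: "cball 0 r \<subseteq> ball (0::complex) 1" using r(2) by auto
          show "continuous_on (cball 0 r) (\<lambda>v. Qf i k h r n (upd z j v))"
            using holomorphic_on_imp_continuous_on[OF holn] sub by (rule continuous_on_subset)
          show "(\<lambda>v. Qf i k h r n (upd z j v)) holomorphic_on ball 0 r"
            using holn by (rule holomorphic_on_subset) (use r(2) in auto)
        qed
      qed auto
      then have "(\<lambda>v. coef i k h (upd z j v)) holomorphic_on ball 0 r" by blast
      then show ?thesis
        by (rule holomorphic_on_imp_differentiable_at[OF _ open_ball]) (use v0r in simp)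
    qed
    then show ?thesis by (simp add: holomorphic_on_open field_differentiable_def[symmetric] open_ball)
  qed
  show "SH (coef i k h)" unfolding SH_def using cont hol by blast
qed

lemma coef_meas:
  fixes h :: "'w \<Rightarrow> complex^'n \<Rightarrow> complex"
  assumes SHw: "\<And>\<omega>. \<omega> \<in> space M \<Longrightarrow> SH (h \<omega>)"
    and meas: "\<And>z. z \<in> pd 1 \<Longrightarrow> (\<lambda>\<omega>. h \<omega> z) \<in> borel_measurable M"
    and z: "z \<in> pd 1"
  shows "(\<lambda>\<omega>. coef i k (h \<omega>) z) \<in> borel_measurable M"
  using z
proof (induction k arbitrary: z rule: less_induct)
  case (less k z)
  obtain r where r: "0 < r" "r < 1" "z \<in> pd r" using pd_radius[OF less.prems] by blast
  have zc: "z \<in> cpd r" using r(3) pd_sub_cpd by blast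
  have lim: "(\<lambda>n. Qf i k (h \<omega>) r n z) \<longlonglongrightarrow> coef i k (h \<omega>) z" if "\<omega> \<in> space M" for \<omega>
    using tendsto_uniform_limitI[OF Q_unif[OF SHw[OF that] r(1,2)] zc] .
  have mQ: "(\<lambda>\<omega>. Qf i k (h \<omega>) r n z) \<in> borel_measurable M" for n
  proof -
    have tn: "norm (tseq r n) < 1" using tseq_le[OF r(1), of n] r(2) by linarith
    have m1: "(\<lambda>\<omega>. h \<omega> (upd z i (tseq r n))) \<in> borel_measurable M"
      by (rule meas[OF upd_in_pd[OF less.prems tn]])
    have m2: "(\<lambda>\<omega>. coef i m (h \<omega>) z) \<in> borel_measurable M" if "m < k" for m
      using less.IH[OF that less.prems] .
    have m3: "(\<lambda>\<omega>. \<Sum>m<k. coef i m (h \<omega>) z * tseq r n ^ m) \<in> borel_measurable M"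
      by (intro borel_measurable_sum borel_measurable_times borel_measurable_const m2) auto
    show ?thesis unfolding Qf_def
      by (intro borel_measurable_divide borel_measurable_diff m1 m3 borel_measurable_const)
  qed
  show ?case by (rule borel_measurable_LIMSEQ_metric[OF mQ lim])
qed

primrec CL :: "'n list \<Rightarrow> nat^'n \<Rightarrow> (complex^'n \<Rightarrow> complex) \<Rightarrow> complex^'n \<Rightarrow> complex" where
  "CL [] \<alpha> h = h"
| "CL (i # is) \<alpha> h = CL is \<alpha> (coef i (\<alpha> $ i) h)"

lemma SH_CL: "SH h \<Longrightarrow> SH (CL is \<alpha> h)"
proof (induction "is" arbitrary: h)
  case Nil then show ?case by simp
next
  case (Cons i "is") show ?case using Cons.IH[OF SH_coef[OF Cons.prems]] by simp
qed

lemma CL_meas: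
  fixes h :: "'w \<Rightarrow> complex^'n \<Rightarrow> complex"
  assumes "\<And>\<omega>. \<omega> \<in> space M \<Longrightarrow> SH (h \<omega>)"
    and "\<And>z. z \<in> pd 1 \<Longrightarrow> (\<lambda>\<omega>. h \<omega> z) \<in> borel_measurable M"
    and "z \<in> pd 1"
  shows "(\<lambda>\<omega>. CL is \<alpha> (h \<omega>) z) \<in> borel_measurable M"
  using assms
proof (induction "is" arbitrary: h z)
  case Nil then show ?case by simp
next
  case (Cons i "is")
  have "(\<lambda>\<omega>. CL is \<alpha> (coef i (\<alpha>$i) (h \<omega>)) z) \<in> borel_measurable M"
  proof (rule Cons.IH)
    show "\<And>\<omega>. \<omega> \<in> space M \<Longrightarrow> SH (coef i (\<alpha>$i) (h \<omega>))" using Cons.prems(1) SH_coef by blast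
    show "\<And>z. z \<in> pd 1 \<Longrightarrow> (\<lambda>\<omega>. coef i (\<alpha>$i) (h \<omega>) z) \<in> borel_measurable M"
      by (rule coef_meas[OF Cons.prems(1,2)])
    show "z \<in> pd 1" by (rule Cons.prems(3))
  qed
  then show ?case by simp
qed

definition inv_in :: "(complex^'n \<Rightarrow> complex) \<Rightarrow> 'n \<Rightarrow> bool" where
  "inv_in g j \<longleftrightarrow> (\<forall>x v. g (upd x j v) = g x)"

lemma inv_coef: "j = i \<or> inv_in h j \<Longrightarrow> inv_in (coef i k h) j"
proof (cases "j = i")
  case True then show ?thesis by (simp add: inv_in_def)
next
  case False
  assume "j = i \<or> inv_in h j"
  then have "inv_in h j" using False by blast
  then show ?thesis unfolding inv_in_def
    using coef_upd_other[of i j h k] False by auto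
qed

lemma inv_CL: "j \<in> set is \<or> inv_in h j \<Longrightarrow> inv_in (CL is \<alpha> h) j"
proof (induction "is" arbitrary: h)
  case Nil then show ?case by simp
next
  case (Cons i "is")
  have "j \<in> set is \<or> inv_in (coef i (\<alpha>$i) h) j"
    using Cons.prems inv_coef by auto
  then show ?case using Cons.IH by simp
qed

lemma inv_all_const_aux:
  assumes "\<forall>j. inv_in g j"
  shows "g z = g (\<chi> j. if j \<in> set ys then 0 else z $ j)"
proof (induction ys)
  case Nil then show ?case by simp
next
  case (Cons y ys)
  have "(\<chi> j. if j \<in> set (y#ys) then 0 else z $ j) = upd (\<chi> j. if j \<in> set ys then 0 else z $ j) y 0"
    by (simp add: vec_eq_iff)
  then show ?case using Cons.IH assms unfolding inv_in_def by simp
qed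

lemma inv_all_const:
  fixes g :: "complex^'n \<Rightarrow> complex"
  assumes "\<forall>j. inv_in g j"
  shows "g z = g 0"
proof -
  obtain ys :: "'n list" where ys: "set ys = UNIV" using finite_list[of "UNIV::'n set"] by auto
  have "(\<chi> j. if j \<in> set ys then 0 else z $ j) = (0::complex^'n)" using ys by (simp add: vec_eq_iff)
  then show ?thesis using inv_all_const_aux[OF assms, of z ys] by simp
qed

lemma CL_cong_idx: "(\<forall>j\<in>set is. \<alpha>$j = \<beta>$j) \<Longrightarrow> CL is \<alpha> h = CL is \<beta> h"
proof (induction "is" arbitrary: h)
  case Nil then show ?case by simp
next
  case (Cons i "is") then show ?case by simp
qed

lemma CL_bound:
  fixes h :: "complex^'n \<Rightarrow> complex" and \<alpha> :: "nat^'n"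
  assumes "distinct is" "SH h" "0 < \<rho>" "\<rho> < 1" "\<forall>x\<in>cpd \<rho>. norm (h x) \<le> B" "x \<in> cpd \<rho>"
  shows "norm (CL is \<alpha> h x) \<le> B / \<rho>^(\<Sum>j\<in>set is. \<alpha>$j)"
  using assms
proof (induction "is" arbitrary: h B)
  case Nil then show ?case by simp
next
  case (Cons i "is")
  define k where "k = \<alpha> $ i"
  have b: "\<forall>y\<in>cpd \<rho>. norm (coef i k h y) \<le> B / \<rho>^k"
  proof
    fix y :: "complex^'n" assume y: "y \<in> cpd \<rho>"
    show "norm (coef i k h y) \<le> B / \<rho>^k"
    proof (rule coef_bound[OF Cons.prems(2) _ Cons.prems(3,4)])
      show "y \<in> pd 1" using y cpd_sub_pd1[OF Cons.prems(4)] by blast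
      show "norm (h (upd y i w)) \<le> B" if "norm w = \<rho>" for w
        using Cons.prems(5) upd_in_cpd[OF y, of w i] that by simp
    qed
  qed
  have "norm (CL is \<alpha> (coef i k h) x) \<le> (B / \<rho>^k) / \<rho>^(\<Sum>j\<in>set is. \<alpha>$j)"
    by (rule Cons.IH) (use Cons.prems SH_coef b in auto)
  also have "\<dots> = B / \<rho>^(\<Sum>j\<in>set (i#is). \<alpha>$j)"
    using Cons.prems(1) by (simp add: power_add k_def)
  finally show ?case by (simp add: k_def)
qed

definition Aset :: "'n list \<Rightarrow> (nat^'n) set" where
  "Aset is = {\<alpha>. \<forall>j. j \<notin> set is \<longrightarrow> \<alpha>$j = 0}"

lemma Aset_Nil: "Aset [] = {0}"
  by (auto simp: Aset_def vec_eq_iff)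

lemma split_facts:
  assumes i: "i \<notin> set is"
  shows "\<And>a. a \<in> Aset (i#is) \<Longrightarrow> (\<lambda>(k,\<beta>). upd \<beta> i k) (a$i, upd a i 0) = a"
    and "\<And>a. a \<in> Aset (i#is) \<Longrightarrow> (a$i, upd a i 0) \<in> UNIV \<times> Aset is"
    and "\<And>b. b \<in> UNIV \<times> Aset is \<Longrightarrow> (\<lambda>\<alpha>. (\<alpha>$i, upd \<alpha> i 0)) ((\<lambda>(k,\<beta>). upd \<beta> i k) b) = b"
    and "\<And>b. b \<in> UNIV \<times> Aset is \<Longrightarrow> (\<lambda>(k,\<beta>). upd \<beta> i k) b \<in> Aset (i#is)"
proof -
  show "(\<lambda>(k,\<beta>). upd \<beta> i k) (a$i, upd a i 0) = a" for a by simp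
  show "(a$i, upd a i 0) \<in> UNIV \<times> Aset is" if "a \<in> Aset (i#is)" for a
    using that by (auto simp: Aset_def)
  show "(\<lambda>\<alpha>. (\<alpha>$i, upd \<alpha> i 0)) ((\<lambda>(k,\<beta>). upd \<beta> i k) b) = b" if "b \<in> UNIV \<times> Aset is" for b
  proof -
    obtain k \<beta> where b: "b = (k, \<beta>)" by (cases b)
    have "\<beta>$i = 0" using that i unfolding b Aset_def by auto
    then have "upd \<beta> i 0 = \<beta>" by (simp add: vec_eq_iff)
    then show ?thesis unfolding b by simp
  qed
  show "(\<lambda>(k,\<beta>). upd \<beta> i k) b \<in> Aset (i#is)" if "b \<in> UNIV \<times> Aset is" for b
    using that by (auto simp: Aset_def)
qed

lemma reindex_split_has_sum:
  fixes g :: "nat^'n \<Rightarrow> 'b::{comm_monoid_add,topological_space}"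
  assumes i: "i \<notin> set is"
  shows "(g has_sum s) (Aset (i#is)) \<longleftrightarrow> ((\<lambda>(k,\<beta>). g (upd \<beta> i k)) has_sum s) (UNIV \<times> Aset is)"
  by (rule has_sum_reindex_bij_witness[where j="\<lambda>\<alpha>. (\<alpha>$i, upd \<alpha> i 0)" and i="\<lambda>(k,\<beta>). upd \<beta> i k"])
     (use split_facts[OF i] in auto)

lemma maj_has_sum:
  fixes q :: real
  assumes "distinct (is :: 'n list)" "0 \<le> q" "q < 1"
  shows "((\<lambda>\<alpha>::nat^'n. \<Prod>j\<in>set is. q^(\<alpha>$j)) has_sum (1/(1-q))^length is) (Aset is)"
  using assms(1)
proof (induction "is")
  case Nil
  show ?case unfolding Aset_Nil by (simp add: has_sum_finite_iff)
next
  case (Cons i "is")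
  have i: "i \<notin> set is" "distinct is" using Cons.prems by auto
  define S where "S = (1/(1-q))^length is"
  define f where "f = (\<lambda>(k::nat, \<beta>::nat^'n). q^k * (\<Prod>j\<in>set is. q^(\<beta>$j)))"
  have inner: "((\<lambda>\<beta>. f (k, \<beta>)) has_sum (q^k * S)) (Aset is)" for k
    unfolding f_def S_def using has_sum_cmult_right[OF Cons.IH[OF i(2)]] by simp
  have "(\<lambda>k. q^k * S) sums (1/(1-q) * S)"
    by (rule sums_mult2[OF geometric_sums]) (use assms in simp)
  then have outer: "((\<lambda>k. q^k * S) has_sum (1/(1-q) * S)) UNIV"
    by (rule sums_nonneg_imp_has_sum) (use assms in \<open>simp add: S_def\<close>)
  have summ: "f summable_on (UNIV \<times> Aset is)"
    by (rule summable_on_SigmaI[OF inner has_sum_imp_summable[OF outer]])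
       (use assms in \<open>auto simp: f_def intro!: mult_nonneg_nonneg prod_nonneg\<close>)
  have hs: "(f has_sum (1/(1-q) * S)) (UNIV \<times> Aset is)"
    by (rule has_sum_SigmaI[OF inner outer summ])
  have eq: "f b = (\<lambda>(k,\<beta>). (\<Prod>j\<in>set (i#is). q^(upd \<beta> i k $ j))) b" if "b \<in> UNIV \<times> Aset is" for b
  proof -
    obtain k \<beta> where b: "b = (k, \<beta>)" by (cases b)
    have "(\<Prod>j\<in>set is. q^(upd \<beta> i k $ j)) = (\<Prod>j\<in>set is. q^(\<beta>$j))"
      by (rule prod.cong) (use i in auto)
    then show ?thesis unfolding b f_def using i by simp
  qed
  have "((\<lambda>(k,\<beta>). (\<Prod>j\<in>set (i#is). q^(upd \<beta> i k $ j))) has_sum (1/(1-q) * S)) (UNIV \<times> Aset is)"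
    using has_sum_cong[of "UNIV \<times> Aset is" f, OF eq] hs by blast
  then have "((\<lambda>\<alpha>::nat^'n. \<Prod>j\<in>set (i#is). q^(\<alpha>$j)) has_sum (1/(1-q) * S)) (Aset (i#is))"
    by (rule reindex_split_has_sum[OF i(1), where g="\<lambda>\<alpha>. \<Prod>j\<in>set (i#is). q^(\<alpha>$j)", THEN iffD2])
  then show ?case by (simp add: S_def)
qed

lemma radius_setup:
  fixes h :: "complex^'n \<Rightarrow> complex" and z :: "complex^'n"
  assumes "SH h" "z \<in> pd 1"
  obtains r \<rho> B where "0 < r" "r < \<rho>" "\<rho> < 1" "\<And>j. norm (z$j) \<le> r"
    "\<forall>x\<in>cpd \<rho>. norm (h x) \<le> B" "0 \<le> B" "z \<in> cpd \<rho>"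
proof -
  obtain r where r: "0 < r" "r < 1" "z \<in> pd r" using pd_radius[OF assms(2)] by blast
  define \<rho> where "\<rho> = (1 + r)/2"
  have \<rho>: "r < \<rho>" "\<rho> < 1" using r by (auto simp: \<rho>_def)
  obtain B where B: "\<forall>x\<in>cpd \<rho>. norm (h x) \<le> B" using SH_bound[OF assms(1) \<rho>(2)] by blast
  have zr: "norm (z$j) \<le> r" for j using r(3) unfolding pd_def by (simp add: less_imp_le)
  have zc: "z \<in> cpd \<rho>" unfolding cpd_def mem_Collect_eq
  proof
    fix j show "norm (z$j) \<le> \<rho>" using zr[of j] \<rho>(1) by linarith
  qed
  have "0 \<le> B" using B zc norm_ge_zero order_trans by blast
  then show ?thesis using that r(1) \<rho> zr B zc by blast
qed

lemma CL_summable: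
  fixes h :: "complex^'n \<Rightarrow> complex" and z :: "complex^'n"
  assumes "distinct is" "SH h" "z \<in> pd 1"
  shows "(\<lambda>\<alpha>. CL is \<alpha> h z * (\<Prod>j\<in>set is. (z$j)^(\<alpha>$j))) summable_on Aset is"
proof -
  obtain r \<rho> B where r: "0 < r" "r < \<rho>" "\<rho> < 1" "\<And>j. norm (z$j) \<le> r"
    and B: "\<forall>x\<in>cpd \<rho>. norm (h x) \<le> B" "0 \<le> B" and zc: "z \<in> cpd \<rho>"
    using radius_setup[OF assms(2,3)] by blast
  have \<rho>0: "0 < \<rho>" using r by linarith
  define q where "q = r / \<rho>"
  have q: "0 \<le> q" "q < 1" using r \<rho>0 by (auto simp: q_def divide_less_eq)
  have maj: "(\<lambda>\<alpha>. B * (\<Prod>j\<in>set is. q^(\<alpha>$j))) summable_on Aset is"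
    using has_sum_imp_summable[OF has_sum_cmult_right[OF maj_has_sum[OF assms(1) q]]] .
  have bnd: "norm (CL is \<alpha> h z * (\<Prod>j\<in>set is. (z$j)^(\<alpha>$j))) \<le> B * (\<Prod>j\<in>set is. q^(\<alpha>$j))" for \<alpha>
  proof -
    have c: "norm (CL is \<alpha> h z) \<le> B / \<rho>^(\<Sum>j\<in>set is. \<alpha>$j)"
      by (rule CL_bound[OF assms(1,2) \<rho>0 r(3) B(1) zc])
    have p: "norm (\<Prod>j\<in>set is. (z$j)^(\<alpha>$j)) \<le> (\<Prod>j\<in>set is. r^(\<alpha>$j))"
    proof -
      have "norm (\<Prod>j\<in>set is. (z$j)^(\<alpha>$j)) = (\<Prod>j\<in>set is. norm (z$j)^(\<alpha>$j))"
        by (simp add: prod_norm[symmetric] norm_power)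
      also have "\<dots> \<le> (\<Prod>j\<in>set is. r^(\<alpha>$j))"
        by (rule prod_mono) (use r(4) in \<open>auto intro: power_mono\<close>)
      finally show ?thesis .
    qed
    have "norm (CL is \<alpha> h z * (\<Prod>j\<in>set is. (z$j)^(\<alpha>$j)))
          = norm (CL is \<alpha> h z) * norm (\<Prod>j\<in>set is. (z$j)^(\<alpha>$j))" by (rule norm_mult)
    also have "\<dots> \<le> (B / \<rho>^(\<Sum>j\<in>set is. \<alpha>$j)) * (\<Prod>j\<in>set is. r^(\<alpha>$j))"
      by (rule mult_mono[OF c p]) (use B(2) \<rho>0 in simp_all)
    also have "\<dots> = B * (\<Prod>j\<in>set is. q^(\<alpha>$j))"
    proof -
      have e1: "\<rho>^(\<Sum>j\<in>set is. \<alpha>$j) = (\<Prod>j\<in>set is. \<rho>^(\<alpha>$j))" by (rule power_sum)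
      have e2: "(\<Prod>j\<in>set is. r^(\<alpha>$j)) / (\<Prod>j\<in>set is. \<rho>^(\<alpha>$j)) = (\<Prod>j\<in>set is. q^(\<alpha>$j))"
        by (simp add: q_def power_divide prod_dividef)
      have "(B / \<rho>^(\<Sum>j\<in>set is. \<alpha>$j)) * (\<Prod>j\<in>set is. r^(\<alpha>$j))
            = B * ((\<Prod>j\<in>set is. r^(\<alpha>$j)) / \<rho>^(\<Sum>j\<in>set is. \<alpha>$j))" by simp
      also have "\<dots> = B * ((\<Prod>j\<in>set is. r^(\<alpha>$j)) / (\<Prod>j\<in>set is. \<rho>^(\<alpha>$j)))"
        by (simp only: e1)
      also have "\<dots> = B * (\<Prod>j\<in>set is. q^(\<alpha>$j))" by (simp only: e2)
      finally show ?thesis .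
    qed
    finally show ?thesis .
  qed
  have "(\<lambda>\<alpha>. norm (CL is \<alpha> h z * (\<Prod>j\<in>set is. (z$j)^(\<alpha>$j)))) summable_on Aset is"
    by (rule Infinite_Sum.abs_summable_on_comparison_test'[OF maj bnd])
  then show ?thesis by (rule abs_summable_summable)
qed

lemma coef_norm_summable:
  fixes h :: "complex^'n \<Rightarrow> complex" and z :: "complex^'n"
  assumes "SH h" "z \<in> pd 1"
  shows "summable (\<lambda>k. norm (coef i k h z * (z$i)^k))"
proof -
  obtain r \<rho> B where r: "0 < r" "r < \<rho>" "\<rho> < 1" "\<And>j. norm (z$j) \<le> r"
    and B: "\<forall>x\<in>cpd \<rho>. norm (h x) \<le> B" "0 \<le> B" and zc: "z \<in> cpd \<rho>"
    using radius_setup[OF assms] by blast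
  have \<rho>0: "0 < \<rho>" using r by linarith
  define q where "q = r / \<rho>"
  have q: "0 \<le> q" "q < 1" using r \<rho>0 by (auto simp: q_def divide_less_eq)
  have bnd: "norm (norm (coef i k h z * (z$i)^k)) \<le> B * q^k" for k
  proof -
    have c: "norm (coef i k h z) \<le> B / \<rho>^k"
    proof (rule coef_bound[OF assms \<rho>0 r(3)])
      show "norm (h (upd z i w)) \<le> B" if "norm w = \<rho>" for w
        using B(1) upd_in_cpd[OF zc, of w i] that by simp
    qed
    have "norm (norm (coef i k h z * (z$i)^k)) = norm (coef i k h z) * norm (z$i)^k"
      by (simp add: norm_mult norm_power)
    also have "\<dots> \<le> (B / \<rho>^k) * r^k"
      by (rule mult_mono[OF c]) (use r(4)[of i] B(2) \<rho>0 in \<open>auto intro: power_mono\<close>)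
    also have "\<dots> = B * q^k" by (simp add: q_def power_divide)
    finally show ?thesis .
  qed
  have "summable (\<lambda>k. B * q^k)" using q by (intro summable_mult summable_geometric) simp
  then show ?thesis by (rule summable_comparison_test[rotated]) (use bnd in blast)
qed

lemma CL_expand:
  fixes h :: "complex^'n \<Rightarrow> complex" and z :: "complex^'n"
  assumes "distinct is" "SH h" "z \<in> pd 1"
  shows "((\<lambda>\<alpha>. CL is \<alpha> h z * (\<Prod>j\<in>set is. (z$j)^(\<alpha>$j))) has_sum h z) (Aset is)"
  using assms(1,2)
proof (induction "is" arbitrary: h)
  case Nil show ?case unfolding Aset_Nil by (simp add: has_sum_finite_iff)
next
  case (Cons i "is")
  have i: "i \<notin> set is" "distinct is" using Cons.prems(1) by auto
  define F where "F = (\<lambda>\<alpha>::nat^'n. CL (i#is) \<alpha> h z * (\<Prod>j\<in>set (i#is). (z$j)^(\<alpha>$j)))"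
  define G where "G = (\<lambda>(k::nat, \<beta>::nat^'n). (CL is \<beta> (coef i k h) z * (\<Prod>j\<in>set is. (z$j)^(\<beta>$j))) * (z$i)^k)"
  have FG: "(\<lambda>(k,\<beta>). F (upd \<beta> i k)) b = G b" if "b \<in> UNIV \<times> Aset is" for b
  proof -
    obtain k \<beta> where b: "b = (k,\<beta>)" by (cases b)
    have c: "CL is (upd \<beta> i k) (coef i k h) = CL is \<beta> (coef i k h)"
      by (rule CL_cong_idx) (use i in auto)
    have p: "(\<Prod>j\<in>set is. (z$j)^(upd \<beta> i k $ j)) = (\<Prod>j\<in>set is. (z$j)^(\<beta>$j))"
      by (rule prod.cong) (use i in auto)
    show ?thesis unfolding b F_def G_def using c p i by (simp add: mult_ac)
  qed
  have inner: "((\<lambda>\<beta>. G (k, \<beta>)) has_sum (coef i k h z * (z$i)^k)) (Aset is)" for k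
    unfolding G_def using has_sum_cmult_left[OF Cons.IH[OF i(2) SH_coef[OF Cons.prems(2)]]] by simp
  have outer: "((\<lambda>k. coef i k h z * (z$i)^k) has_sum h z) UNIV"
  proof (rule norm_summable_imp_has_sum)
    have "norm (z$i) < 1" using assms(3) unfolding pd_def by blast
    then show "(\<lambda>k. coef i k h z * (z$i)^k) sums h z"
      using coef_sums[OF Cons.prems(2) assms(3), of "z$i" i] by simp
    show "summable (\<lambda>k. norm (coef i k h z * (z$i)^k))"
      by (rule coef_norm_summable[OF Cons.prems(2) assms(3)])
  qed
  have sF: "F summable_on Aset (i#is)" unfolding F_def by (rule CL_summable[OF Cons.prems(1,2) assms(3)])
  then have "(F has_sum infsum F (Aset (i#is))) (Aset (i#is))" by (rule has_sum_infsum)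
  then have "((\<lambda>(k,\<beta>). F (upd \<beta> i k)) has_sum infsum F (Aset (i#is))) (UNIV \<times> Aset is)"
    by (rule reindex_split_has_sum[OF i(1), THEN iffD1])
  then have "(G has_sum infsum F (Aset (i#is))) (UNIV \<times> Aset is)"
    using has_sum_cong[of "UNIV \<times> Aset is" "\<lambda>(k,\<beta>). F (upd \<beta> i k)" G, OF FG] by blast
  then have summ: "G summable_on (UNIV \<times> Aset is)" by (rule has_sum_imp_summable)
  have "(G has_sum h z) (UNIV \<times> Aset is)"
    by (rule has_sum_SigmaI[OF inner outer summ])
  then have "((\<lambda>(k,\<beta>). F (upd \<beta> i k)) has_sum h z) (UNIV \<times> Aset is)"
    using has_sum_cong[of "UNIV \<times> Aset is" "\<lambda>(k,\<beta>). F (upd \<beta> i k)" G, OF FG] by blast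
  then have "(F has_sum h z) (Aset (i#is))"
    by (rule reindex_split_has_sum[OF i(1), THEN iffD2])
  then show ?case unfolding F_def .
qed

theorem theorem4p2:
  fixes M :: "'w measure" and f :: "'w \<Rightarrow> complex^'n \<Rightarrow> complex"
  assumes "random_holomorphic M polydisc f"
  shows "\<exists>a :: nat^'n \<Rightarrow> 'w \<Rightarrow> complex.
           (\<forall>\<alpha>. a \<alpha> \<in> borel_measurable M) \<and>
           (\<forall>\<omega>\<in>space M. \<forall>z\<in>polydisc.
              ((\<lambda>\<alpha>. a \<alpha> \<omega> * monomial_n z \<alpha>) has_sum f \<omega> z) UNIV)"
proof -
  obtain xs :: "'n list" where xs: "set xs = UNIV" "distinct xs"
    using finite_distinct_list[of "UNIV::'n set"] by auto
  have H: "\<forall>\<omega>\<in>space M. holomorphic_n_on (f \<omega>) polydisc"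
    using assms unfolding random_holomorphic_def by (rule conjunct1)
  have Mz: "\<forall>z\<in>polydisc. (\<lambda>\<omega>. f \<omega> z) \<in> borel_measurable M"
    using assms unfolding random_holomorphic_def by (rule conjunct2)
  have SHf: "SH (f \<omega>)" if "\<omega> \<in> space M" for \<omega>
    by (rule SH_from_hol[OF bspec[OF H that]])
  have mf: "(\<lambda>\<omega>. f \<omega> z) \<in> borel_measurable M" if "z \<in> pd 1" for z
  proof -
    have "z \<in> polydisc" using that unfolding polydisc_def pd_def by simp
    then show ?thesis by (rule bspec[OF Mz])
  qed
  have z0: "(0::complex^'n) \<in> pd 1" by (simp add: pd_def)
  have AU: "Aset xs = UNIV" by (simp add: Aset_def xs)
  define a where "a = (\<lambda>\<alpha> \<omega>. CL xs \<alpha> (f \<omega>) 0)"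
  show ?thesis
  proof (intro exI conjI ballI allI)
    fix \<alpha> show "a \<alpha> \<in> borel_measurable M"
      unfolding a_def by (rule CL_meas[OF SHf mf z0])
  next
    fix \<omega> and z :: "complex^'n" assume \<omega>: "\<omega> \<in> space M" and z: "z \<in> polydisc"
    have zp: "z \<in> pd 1" using z unfolding polydisc_def pd_def by simp
    have e: "((\<lambda>\<alpha>. CL xs \<alpha> (f \<omega>) z * (\<Prod>j\<in>set xs. (z$j)^(\<alpha>$j))) has_sum f \<omega> z) (Aset xs)"
      by (rule CL_expand[OF xs(2) SHf[OF \<omega>] zp])
    have c: "CL xs \<alpha> (f \<omega>) z = a \<alpha> \<omega>" for \<alpha>
      unfolding a_def
    proof (rule inv_all_const)
      show "\<forall>j. inv_in (CL xs \<alpha> (f \<omega>)) j" by (intro allI inv_CL) (simp add: xs(1))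
    qed
    show "((\<lambda>\<alpha>. a \<alpha> \<omega> * monomial_n z \<alpha>) has_sum f \<omega> z) UNIV"
      using e unfolding AU c xs(1) monomial_n_def .
  qed
qed

end
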